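(* Let $G$ be a finite non-abelian group. If the non-centralizer graph $\Upsilon_G$ is regular, then $G/Z(G)$ is an elementary abelian $2$-group.
   Context: For a finite group $G$, $C_G(x)$ denotes the centralizer of $x\in G$ and $Z(G)$ the center. The non-centralizer graph $\Upsilon_G$ is the simple graph with vertex set $G$ in which two distinct vertices $x,y$ are adjacent if and only if $C_G(x)\neq C_G(y)$. A graph is regular if all its vertices have the same degree. *)

theory Defs
  imports "HOL-Algebra.Algebra"
begin

definition centralizer :: "('a, 'b) monoid_scheme \<Rightarrow> 'a \<Rightarrow> 'a set" where
  "centralizer G x = {y \<in> carrier G. y \<otimes>\<^bsub>G\<^esub> x = x \<otimes>\<^bsub>G\<^esub> y}"

definition center :: "('a, 'b) monoid_scheme \<Rightarrow> 'a set" where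
  "center G = {z \<in> carrier G. \<forall>y \<in> carrier G. z \<otimes>\<^bsub>G\<^esub> y = y \<otimes>\<^bsub>G\<^esub> z}"

definition noncentralizer_adj :: "('a, 'b) monoid_scheme \<Rightarrow> 'a \<Rightarrow> 'a \<Rightarrow> bool" where
  "noncentralizer_adj G x y \<longleftrightarrow> x \<noteq> y \<and> centralizer G x \<noteq> centralizer G y"

definition noncentralizer_degree :: "('a, 'b) monoid_scheme \<Rightarrow> 'a \<Rightarrow> nat" where
  "noncentralizer_degree G x = card {y \<in> carrier G. noncentralizer_adj G x y}"

definition noncentralizer_graph_regular :: "('a, 'b) monoid_scheme \<Rightarrow> bool" where
  "noncentralizer_graph_regular G \<longleftrightarrow>
     (\<forall>x \<in> carrier G. \<forall>y \<in> carrier G. noncentralizer_degree G x = noncentralizer_degree G y)"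

definition elementary_abelian_2_group :: "('a, 'b) monoid_scheme \<Rightarrow> bool" where
  "elementary_abelian_2_group H \<longleftrightarrow> comm_group H \<and>
     (\<forall>x \<in> carrier H. x [^]\<^bsub>H\<^esub> (2::nat) = \<one>\<^bsub>H\<^esub>)"

end

theory Submission
  imports Defs
begin

context group begin
lemma comm_inv:
  assumes a: "a \<in> carrier G" and y: "y \<in> carrier G" and c: "a \<otimes> y = y \<otimes> a"
  shows "inv a \<otimes> y = y \<otimes> inv a"
proof -
  have "inv a \<otimes> y = inv a \<otimes> y \<otimes> (a \<otimes> inv a)" using a y by simp
  also have "\<dots> = inv a \<otimes> (y \<otimes> a) \<otimes> inv a" using a y by (simp add: m_assoc)
  also have "\<dots> = inv a \<otimes> (a \<otimes> y) \<otimes> inv a" using c by simp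
  also have "\<dots> = y \<otimes> inv a" using a y by (simp add: m_assoc[symmetric])
  finally show ?thesis .
qed
lemma center_subgroup: "subgroup (center G) G"
proof (rule subgroupI)
  show "center G \<subseteq> carrier G" unfolding center_def by auto
  show "center G \<noteq> {}" unfolding center_def using one_closed by force
next
  fix a b assume a: "a \<in> center G" and b: "b \<in> center G"
  have ac: "a \<in> carrier G" and bc: "b \<in> carrier G" and
    ay: "\<And>y. y \<in> carrier G \<Longrightarrow> a \<otimes> y = y \<otimes> a" and
    by': "\<And>y. y \<in> carrier G \<Longrightarrow> b \<otimes> y = y \<otimes> b" using a b unfolding center_def by auto
  have "a \<otimes> b \<otimes> y = y \<otimes> (a \<otimes> b)" if y: "y \<in> carrier G" for y
  proof -
    have "a \<otimes> b \<otimes> y = a \<otimes> (y \<otimes> b)" using ac bc y by'[OF y] by (simp add: m_assoc)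
    also have "\<dots> = (a \<otimes> y) \<otimes> b" using ac bc y by (simp add: m_assoc)
    also have "\<dots> = y \<otimes> (a \<otimes> b)" using ac bc y ay[OF y] by (simp add: m_assoc)
    finally show ?thesis .
  qed
  then show "a \<otimes> b \<in> center G" unfolding center_def using ac bc by auto
next
  fix a assume a: "a \<in> center G"
  have ac: "a \<in> carrier G" and ay: "\<And>y. y \<in> carrier G \<Longrightarrow> a \<otimes> y = y \<otimes> a"
    using a unfolding center_def by auto
  have "inv a \<otimes> y = y \<otimes> inv a" if y: "y \<in> carrier G" for y
    using ac y ay[OF y] by (simp add: comm_inv)
  then show "inv a \<in> center G" unfolding center_def using ac by auto
qed

lemma center_normal: "center G \<lhd> G"
proof (rule normalI[OF center_subgroup], intro ballI)
  fix x assume x: "x \<in> carrier G"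
  show "center G #> x = x <# center G"
    unfolding r_coset_def l_coset_def center_def using x by auto
qed

lemma centralizer_one: "centralizer G \<one> = carrier G"
  unfolding centralizer_def by auto

lemma centralizer_carrier_iff:
  "y \<in> carrier G \<Longrightarrow> centralizer G y = carrier G \<longleftrightarrow> y \<in> center G"
  unfolding centralizer_def center_def by (auto simp: set_eq_iff) metis

lemma centralizer_mult_center:
  assumes z: "z \<in> center G" and x: "x \<in> carrier G"
  shows "centralizer G (z \<otimes> x) = centralizer G x"
proof -
  have zc: "z \<in> carrier G" and zy: "\<And>y. y \<in> carrier G \<Longrightarrow> z \<otimes> y = y \<otimes> z"
    using z unfolding center_def by auto
  have "y \<otimes> (z \<otimes> x) = (z \<otimes> x) \<otimes> y \<longleftrightarrow> y \<otimes> x = x \<otimes> y" if y: "y \<in> carrier G" for y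
  proof -
    have "y \<otimes> (z \<otimes> x) = z \<otimes> (y \<otimes> x)"
      using y x zc zy by (metis m_assoc)
    moreover have "(z \<otimes> x) \<otimes> y = z \<otimes> (x \<otimes> y)" using y x zc by (simp add: m_assoc)
    ultimately show ?thesis using y x zc by simp
  qed
  then show ?thesis unfolding centralizer_def by auto
qed

lemma centralizer_inv:
  assumes x: "x \<in> carrier G"
  shows "centralizer G (inv x) = centralizer G x"
proof -
  have "y \<otimes> inv x = inv x \<otimes> y \<longleftrightarrow> y \<otimes> x = x \<otimes> y" if y: "y \<in> carrier G" for y
    using x y comm_inv[of x y] comm_inv[of "inv x" y] by (auto simp: inv_inv)
  then show ?thesis unfolding centralizer_def by auto
qed

lemma square_dvd_center_of_regular:
  assumes fin: "finite (carrier G)" and reg: "noncentralizer_graph_regular G"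
    and x: "x \<in> carrier G"
  shows "x \<otimes> x \<in> center G"
proof -
  define S where "S = (\<lambda>u. {y \<in> carrier G. centralizer G y = centralizer G u})"
  have deg: "noncentralizer_degree G u = card (carrier G) - card (S u)" if u: "u \<in> carrier G" for u
  proof -
    have "{y \<in> carrier G. noncentralizer_adj G u y} = carrier G - S u"
      unfolding S_def noncentralizer_adj_def by auto
    moreover have "S u \<subseteq> carrier G" unfolding S_def by auto
    ultimately show ?thesis unfolding noncentralizer_degree_def
      using fin by (simp add: card_Diff_subset finite_subset)
  qed
  have Ssub: "S u \<subseteq> carrier G" for u unfolding S_def by auto
  have csub: "center G \<subseteq> carrier G" unfolding center_def by blast
  have "S \<one> = center G"
    unfolding S_def centralizer_one using csub centralizer_carrier_iff
    by blast
  have "noncentralizer_degree G x = noncentralizer_degree G \<one>"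
    using reg x one_closed unfolding noncentralizer_graph_regular_def by blast
  hence "card (carrier G) - card (S x) = card (carrier G) - card (S \<one>)"
    using deg x by simp
  moreover have "card (S x) \<le> card (carrier G)" "card (S \<one>) \<le> card (carrier G)"
    using fin Ssub by (auto intro: card_mono)
  ultimately have "card (S x) = card (S \<one>)" by linarith
  hence cS: "card (S x) = card (center G)" using \<open>S \<one> = center G\<close> by simp
  have sub: "center G #> x \<subseteq> S x"
  proof
    fix w assume "w \<in> center G #> x"
    then obtain z where z: "z \<in> center G" "w = z \<otimes> x" unfolding r_coset_def by blast
    then show "w \<in> S x" unfolding S_def
      using centralizer_mult_center[OF z(1) x] csub x by auto
  qed
  have "card (center G) = card (center G #> x)"
    using card_rcosets_equal[OF rcosetsI[OF csub x] csub] .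
  hence eq: "center G #> x = S x"
    using card_subset_eq[OF finite_subset[OF Ssub fin] sub] cS by simp
  have "inv x \<in> S x" unfolding S_def using x centralizer_inv by auto
  hence "inv x \<in> center G #> x" using eq by simp
  hence "inv x \<otimes> inv x \<in> center G"
    using subgroup.rcos_module_imp[OF center_subgroup is_group x] by simp
  hence "inv (inv x \<otimes> inv x) \<in> center G"
    using subgroup.m_inv_closed[OF center_subgroup] by blast
  moreover have "inv (inv x \<otimes> inv x) = x \<otimes> x" using x by (simp add: inv_mult_group)
  ultimately show ?thesis by simp
qed

lemma exp2_comm:
  assumes sq: "\<And>x. x \<in> carrier G \<Longrightarrow> x \<otimes> x = \<one>"
  shows "comm_group G"
proof -
  have invx: "inv x = x" if x: "x \<in> carrier G" for x
    using inv_equality[OF sq[OF x] x x] .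
  have "x \<otimes> y = y \<otimes> x" if xy: "x \<in> carrier G" "y \<in> carrier G" for x y
  proof -
    have "x \<otimes> y = inv (x \<otimes> y)" using invx[of "x \<otimes> y"] xy by simp
    also have "\<dots> = inv y \<otimes> inv x" using xy by (simp add: inv_mult_group)
    also have "\<dots> = y \<otimes> x" using xy invx by simp
    finally show ?thesis .
  qed
  then show ?thesis by (rule group_comm_groupI)
qed

end

lemma p2: "monoid M \<Longrightarrow> A \<in> carrier M \<Longrightarrow> A [^]\<^bsub>M\<^esub> (2::nat) = A \<otimes>\<^bsub>M\<^esub> A"
  by (simp add: numeral_2_eq_2 monoid.nat_pow_Suc monoid.nat_pow_0 monoid.l_one)

theorem theorem2p6:
  fixes G :: "('a, 'b) monoid_scheme"
  assumes "group G"
    and "finite (carrier G)"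
    and "\<not> comm_group G"
    and "noncentralizer_graph_regular G"
  shows "elementary_abelian_2_group (G Mod (center G))"
proof -
  interpret group G by fact
  interpret N: normal "center G" G by (rule center_normal)
  interpret Q: group "G Mod center G" by (rule N.factorgroup_is_group)
  have sq: "A [^]\<^bsub>G Mod center G\<^esub> (2::nat) = \<one>\<^bsub>G Mod center G\<^esub>"
    if A: "A \<in> carrier (G Mod center G)" for A
  proof -
    obtain a where a: "a \<in> carrier G" "A = center G #>\<^bsub>G\<^esub> a"
      using A by (auto simp: carrier_FactGroup)
    have "A [^]\<^bsub>G Mod center G\<^esub> (2::nat) = center G #>\<^bsub>G\<^esub> (a [^]\<^bsub>G\<^esub> (2::nat))"
      using N.FactGroup_pow a by simp
    also have "a [^]\<^bsub>G\<^esub> (2::nat) = a \<otimes>\<^bsub>G\<^esub> a" using p2[OF is_monoid a(1)] .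
    also have "center G #>\<^bsub>G\<^esub> (a \<otimes>\<^bsub>G\<^esub> a) = center G"
      using square_dvd_center_of_regular[OF assms(2) assms(4) a(1)]
      by (simp add: N.rcos_const is_group)
    finally show ?thesis by simp
  qed
  have "comm_group (G Mod center G)"
  proof (rule Q.exp2_comm)
    fix A assume A: "A \<in> carrier (G Mod center G)"
    show "A \<otimes>\<^bsub>G Mod center G\<^esub> A = \<one>\<^bsub>G Mod center G\<^esub>"
      using sq[OF A] p2[OF Q.is_monoid A] by simp
  qed
  then show ?thesis unfolding elementary_abelian_2_group_def using sq by blast
qed

end
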